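(* For every integer $k\ge 0$, the set ${\bf Forb}(\Gamma_{\le k})$ is non-empty.
   Context: For a finite graph $G$ and indeterminates $X_G=\{x_u : u\in V(G)\}$, the generalized Laplacian matrix $L(G,X_G)$ is the $V(G)\times V(G)$ matrix over $\mathbb{Z}[X_G]$ with $(u,u)$-entry $x_u$ and $(u,v)$-entry $-m_{uv}$ for $u\ne v$, $m_{uv}$ being the number of edges between $u$ and $v$. The $i$-th critical ideal $I_i(G,X_G)$ is the ideal of $\mathbb{Z}[X_G]$ generated by all $i\times i$ minors of $L(G,X_G)$ (with $I_i=\langle1\rangle$ for $i<1$, $I_i=\langle 0\rangle$ for $i>|V(G)|$). The algebraic co-rank $\gamma(G)$ is the number of critical ideals of $G$ equal to $\langle 1\rangle$. $\Gamma_{\le k}$ is the set of simple connected graphs with $\gamma\le k$; ${\bf Forb}(\Gamma_{\le k})$ is the set of minimal (under induced subgraphs) simple connected graphs $G$ with $\gamma(G)\ge k+1$, equivalently the simple connected graphs $G$ with $\gamma(G)=k+1$ and $\gamma(G\setminus v)<\gamma(G)$ for all vertices $v$. *)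

theory Defs
  imports "HOL-Library.Poly_Mapping" "Jordan_Normal_Form.Determinant"
begin

text \<open>Multivariate integer polynomials Z[x_v : v in nat]: monomials are finitely
supported exponent vectors, polynomials finitely supported coefficient maps.\<close>
type_synonym ipoly = "(nat \<Rightarrow>\<^sub>0 nat) \<Rightarrow>\<^sub>0 int"

definition Var :: "nat \<Rightarrow> ipoly" where
  "Var u = Poly_Mapping.single (Poly_Mapping.single u 1) 1"

definition simple_graph :: "nat set \<Rightarrow> (nat \<Rightarrow> nat \<Rightarrow> bool) \<Rightarrow> bool" where
  "simple_graph V E \<longleftrightarrow> finite V \<and> (\<forall>u v. E u v \<longrightarrow> u \<in> V \<and> v \<in> V)
     \<and> (\<forall>u v. E u v \<longrightarrow> E v u) \<and> (\<forall>u. \<not> E u u)"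

definition connected_graph :: "nat set \<Rightarrow> (nat \<Rightarrow> nat \<Rightarrow> bool) \<Rightarrow> bool" where
  "connected_graph V E \<longleftrightarrow> V \<noteq> {} \<and> (\<forall>u\<in>V. \<forall>v\<in>V. E\<^sup>*\<^sup>* u v)"

definition del_vertex_E :: "(nat \<Rightarrow> nat \<Rightarrow> bool) \<Rightarrow> nat \<Rightarrow> nat \<Rightarrow> nat \<Rightarrow> bool" where
  "del_vertex_E E v = (\<lambda>a b. E a b \<and> a \<noteq> v \<and> b \<noteq> v)"

text \<open>Entries of the generalized Laplacian L(G,X_G) (simple graph: m_uv is 0 or 1).\<close>
definition gen_lap :: "(nat \<Rightarrow> nat \<Rightarrow> bool) \<Rightarrow> nat \<Rightarrow> nat \<Rightarrow> ipoly" where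
  "gen_lap E u v = (if u = v then Var u else if E u v then -1 else 0)"

definition minors :: "nat set \<Rightarrow> (nat \<Rightarrow> nat \<Rightarrow> bool) \<Rightarrow> nat \<Rightarrow> ipoly set" where
  "minors V E i = {det (mat i i (\<lambda>(a, b). gen_lap E (sorted_list_of_set R ! a)
                                                    (sorted_list_of_set C ! b)))
                   | R C. R \<subseteq> V \<and> C \<subseteq> V \<and> card R = i \<and> card C = i}"

definition generates_unit_ideal :: "'a::comm_ring_1 set \<Rightarrow> bool" where
  "generates_unit_ideal S \<longleftrightarrow> (\<exists>F c. finite F \<and> F \<subseteq> S \<and> (\<Sum>m\<in>F. c m * m) = 1)"

definition alg_corank :: "nat set \<Rightarrow> (nat \<Rightarrow> nat \<Rightarrow> bool) \<Rightarrow> nat" where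
  "alg_corank V E = card {i \<in> {1..card V}. generates_unit_ideal (minors V E i)}"

definition in_Forb :: "nat \<Rightarrow> nat set \<Rightarrow> (nat \<Rightarrow> nat \<Rightarrow> bool) \<Rightarrow> bool" where
  "in_Forb k V E \<longleftrightarrow> simple_graph V E \<and> connected_graph V E \<and>
     alg_corank V E = k + 1 \<and>
     (\<forall>v\<in>V. alg_corank (V - {v}) (del_vertex_E E v) < alg_corank V E)"

end

theory Submission
  imports Defs
begin

definition mon :: "(nat \<Rightarrow> int) \<Rightarrow> (nat \<Rightarrow>\<^sub>0 nat) \<Rightarrow> int" where
  "mon a m = (\<Prod>v\<in>Poly_Mapping.keys m. a v ^ Poly_Mapping.lookup m v)"

lemma mon_superset:
  assumes "finite S" "Poly_Mapping.keys m \<subseteq> S"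
  shows "mon a m = (\<Prod>v\<in>S. a v ^ Poly_Mapping.lookup m v)"
  unfolding mon_def
  by (rule prod.mono_neutral_left) (use assms in \<open>auto simp: in_keys_iff\<close>)

lemma mon_add: "mon a (m + m') = mon a m * mon a m'"
proof -
  let ?S = "Poly_Mapping.keys m \<union> Poly_Mapping.keys m'"
  have "mon a (m + m') = (\<Prod>v\<in>?S. a v ^ Poly_Mapping.lookup (m + m') v)"
    by (rule mon_superset) (use keys_add[of m m'] in auto)
  also have "\<dots> = (\<Prod>v\<in>?S. a v ^ Poly_Mapping.lookup m v) * (\<Prod>v\<in>?S. a v ^ Poly_Mapping.lookup m' v)"
    by (simp add: lookup_add power_add prod.distrib)
  also have "\<dots> = mon a m * mon a m'"
    by (subst (1 2) mon_superset[of ?S]) auto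
  finally show ?thesis .
qed

lemma mon_zero: "mon a 0 = 1" by (simp add: mon_def)

definition ev :: "(nat \<Rightarrow> int) \<Rightarrow> ipoly \<Rightarrow> int" where
  "ev a p = (\<Sum>m\<in>Poly_Mapping.keys p. Poly_Mapping.lookup p m * mon a m)"

lemma ev_superset:
  assumes "finite S" "Poly_Mapping.keys p \<subseteq> S"
  shows "ev a p = (\<Sum>m\<in>S. Poly_Mapping.lookup p m * mon a m)"
  unfolding ev_def
  by (rule sum.mono_neutral_left) (use assms in \<open>auto simp: in_keys_iff\<close>)

lemma ev_add: "ev a (p + q) = ev a p + ev a q"
proof -
  let ?S = "Poly_Mapping.keys p \<union> Poly_Mapping.keys q"
  have "ev a (p + q) = (\<Sum>m\<in>?S. Poly_Mapping.lookup (p + q) m * mon a m)"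
    by (rule ev_superset) (use keys_add[of p q] in auto)
  also have "\<dots> = (\<Sum>m\<in>?S. Poly_Mapping.lookup p m * mon a m) + (\<Sum>m\<in>?S. Poly_Mapping.lookup q m * mon a m)"
    by (simp add: lookup_add distrib_right sum.distrib)
  also have "\<dots> = ev a p + ev a q"
    by (subst (1 2) ev_superset[of ?S]) auto
  finally show ?thesis .
qed

lemma ev_single: "ev a (Poly_Mapping.single m c) = c * mon a m"
  by (simp add: ev_def)

lemma ev_zero: "ev a 0 = 0" by (simp add: ev_def)

lemma pm_induct:
  fixes P :: "('a \<Rightarrow>\<^sub>0 'b::monoid_add) \<Rightarrow> bool"
  assumes "P 0" "\<And>f m c. P f \<Longrightarrow> P (f + Poly_Mapping.single m c)"
  shows "P f"
proof (induct f rule: update_induct)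
  case const then show ?case using assms(1) .
next
  case (update f a b)
  have "Poly_Mapping.update a b f = f + Poly_Mapping.single a b"
    using update(1) by (intro poly_mapping_eqI) (auto simp: lookup_update lookup_add lookup_single in_keys_iff when_def)
  then show ?case using assms(2)[OF update(3)] by simp
qed

lemma ev_mult_single: "ev a (Poly_Mapping.single m c * q) = c * mon a m * ev a q"
proof (induct q rule: pm_induct)
  case 1 then show ?case by (simp add: ev_zero)
next
  case (2 f m' c')
  then show ?case
    by (simp only: distrib_left ev_add mult_single ev_single mon_add) (simp add: ring_distribs)
qed

lemma ev_mult: "ev a (p * q) = ev a p * ev a q"
proof (induct p rule: pm_induct)
  case 1 then show ?case by (simp add: ev_zero)
next
  case (2 f m c)
  then show ?case
    by (simp only: distrib_right ev_add ev_mult_single) (simp add: ev_single ring_distribs)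
qed

lemma one_ipoly: "(1::ipoly) = Poly_Mapping.single 0 1"
  by simp

lemma ev_one: "ev a 1 = 1"
  by (simp only: one_ipoly ev_single mon_zero mult_1)

lemma ev_hom: "comm_ring_hom (ev a)"
  by unfold_locales (simp_all add: ev_zero ev_one ev_mult ev_add)

lemma ev_Var: "ev a (Var u) = a u"
  by (simp add: Var_def ev_single mon_def)

lemma row_sum_zero:
  assumes fin: "finite V" and EV: "\<forall>u v. E u v \<longrightarrow> u \<in> V \<and> v \<in> V"
    and irr: "\<forall>u. \<not> E u u" and u: "u \<in> V"
  shows "(\<Sum>w\<in>V. ev (\<lambda>x. int (card {w\<in>V. E x w})) (gen_lap E u w)) = 0"
proof -
  let ?a = "\<lambda>x. int (card {w\<in>V. E x w})"
  interpret h: comm_ring_hom "ev ?a" by (rule ev_hom)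
  have "(\<Sum>w\<in>V. ev ?a (gen_lap E u w)) = ev ?a (gen_lap E u u) + (\<Sum>w\<in>V-{u}. ev ?a (gen_lap E u w))"
    using fin u by (simp add: sum.remove)
  also have "(\<Sum>w\<in>V-{u}. ev ?a (gen_lap E u w)) = (\<Sum>w\<in>V-{u}. if E u w then -1 else 0)"
    by (rule sum.cong) (auto simp: gen_lap_def h.hom_uminus)
  also have "\<dots> = - int (card {w\<in>V. E u w})"
  proof -
    have "(V - {u}) \<inter> Collect (E u) = {w\<in>V. E u w}" using irr by auto
    then show ?thesis using fin by (simp add: sum.If_cases)
  qed
  finally show ?thesis by (simp add: gen_lap_def ev_Var)
qed

lemma full_minor_nonunit:
  assumes fin: "finite V" and ne: "V \<noteq> {}" and EV: "\<forall>u v. E u v \<longrightarrow> u \<in> V \<and> v \<in> V"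
    and irr: "\<forall>u. \<not> E u u"
  shows "\<not> generates_unit_ideal (minors V E (card V))"
proof
  let ?a = "\<lambda>x. int (card {w\<in>V. E x w})"
  let ?n = "card V"
  let ?s = "sorted_list_of_set V"
  interpret h: comm_ring_hom "ev ?a" by (rule ev_hom)
  have npos: "?n > 0" using fin ne by (simp add: card_gt_0_iff)
  have bij: "bij_betw (\<lambda>i. ?s ! i) {0..<?n} V"
  proof -
    have "bij_betw (\<lambda>i. ?s ! i) {..<length ?s} (set ?s)"
      by (intro bij_betw_nth) auto
    then show ?thesis using fin by (simp add: atLeast0LessThan)
  qed
  have det0: "ev ?a m = 0" if m: "m \<in> minors V E ?n" for m
  proof -
    from m obtain R C where RC: "R \<subseteq> V" "C \<subseteq> V" "card R = ?n" "card C = ?n"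
      and mdef: "m = det (mat ?n ?n (\<lambda>(a, b). gen_lap E (sorted_list_of_set R ! a) (sorted_list_of_set C ! b)))"
      unfolding minors_def by blast
    have "R = V" using card_subset_eq[OF fin RC(1) RC(3)] .
    have "C = V" using card_subset_eq[OF fin RC(2) RC(4)] .
    let ?M = "mat ?n ?n (\<lambda>(i, j). ev ?a (gen_lap E (?s ! i) (?s ! j)))"
    have "ev ?a m = det (map_mat (ev ?a) (mat ?n ?n (\<lambda>(a, b). gen_lap E (?s ! a) (?s ! b))))"
      using mdef \<open>R = V\<close> \<open>C = V\<close> by (simp add: h.hom_det)
    also have "map_mat (ev ?a) (mat ?n ?n (\<lambda>(a, b). gen_lap E (?s ! a) (?s ! b))) = ?M"
      by (rule eq_matI) auto
    also have "det ?M = 0"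
    proof (subst det_0_iff_vec_prod_zero[of _ ?n])
      show "?M \<in> carrier_mat ?n ?n" by simp
      show "\<exists>v. v \<in> carrier_vec ?n \<and> v \<noteq> 0\<^sub>v ?n \<and> ?M *\<^sub>v v = 0\<^sub>v ?n"
      proof (intro exI conjI)
        show "vec ?n (\<lambda>_. 1) \<in> carrier_vec ?n" by simp
        show "vec ?n (\<lambda>_. 1::int) \<noteq> 0\<^sub>v ?n"
        proof
          assume "vec ?n (\<lambda>_. 1::int) = 0\<^sub>v ?n"
          then have "vec ?n (\<lambda>_. 1::int) $ 0 = 0\<^sub>v ?n $ 0" by simp
          then show False using npos by simp
        qed
        show "?M *\<^sub>v vec ?n (\<lambda>_. 1) = 0\<^sub>v ?n"
        proof (rule eq_vecI)
          fix i assume i: "i < dim_vec (0\<^sub>v ?n :: int vec)"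
          then have i': "i < ?n" by simp
          have "(?M *\<^sub>v vec ?n (\<lambda>_. 1)) $ i = (\<Sum>j\<in>{0..<?n}. ev ?a (gen_lap E (?s ! i) (?s ! j)))"
            using i' by (simp add: scalar_prod_def row_def)
          also have "\<dots> = (\<Sum>w\<in>V. ev ?a (gen_lap E (?s ! i) w))"
            using sum.reindex_bij_betw[OF bij, of "\<lambda>w. ev ?a (gen_lap E (?s ! i) w)"] by simp
          also have "\<dots> = 0"
          proof (rule row_sum_zero[OF fin EV irr])
            show "?s ! i \<in> V" using bij i' by (auto dest: bij_betw_apply)
          qed
          finally show "(?M *\<^sub>v vec ?n (\<lambda>_. 1)) $ i = 0\<^sub>v ?n $ i" using i' by simp
        qed simp
      qed
    qed
    finally show ?thesis .
  qed
  assume "generates_unit_ideal (minors V E ?n)"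
  then obtain F c where F: "finite F" "F \<subseteq> minors V E ?n" "(\<Sum>m\<in>F. c m * m) = 1"
    unfolding generates_unit_ideal_def by blast
  have "ev ?a (\<Sum>m\<in>F. c m * m) = (\<Sum>m\<in>F. ev ?a (c m) * ev ?a m)"
    by (simp add: h.hom_sum h.hom_mult)
  also have "\<dots> = 0" by (rule sum.neutral) (use F(2) det0 in auto)
  finally show False using F(3) h.hom_one by simp
qed

definition PE :: "nat \<Rightarrow> nat \<Rightarrow> nat \<Rightarrow> bool" where
  "PE n = (\<lambda>a b. a < n \<and> b < n \<and> (a = Suc b \<or> b = Suc a))"

lemma unit_of_sq:
  fixes x :: "'a::comm_ring_1"
  assumes "x \<in> S" "x * x = 1"
  shows "generates_unit_ideal S"
  unfolding generates_unit_ideal_def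
proof (intro exI conjI)
  show "finite {x}" by simp
  show "{x} \<subseteq> S" using assms(1) by simp
  show "(\<Sum>m\<in>{x}. (\<lambda>_. x) m * m) = 1" using assms(2) by (simp only: sum.insert_if finite.emptyI empty_iff if_False sum.empty add_0_right)
qed

lemma path_unit:
  assumes "1 \<le> i" "i < n"
  shows "generates_unit_ideal (minors {0..<n} (PE n) i)"
proof -
  let ?M = "mat i i (\<lambda>(a, b). gen_lap (PE n) (sorted_list_of_set {0..<i} ! a) (sorted_list_of_set {1..<i+1} ! b))"
  let ?N = "mat i i (\<lambda>(a, b). gen_lap (PE n) a (Suc b))"
  have mem: "det ?M \<in> minors {0..<n} (PE n) i"
    unfolding minors_def using assms by (intro CollectI exI[of _ "{0..<i}"] exI[of _ "{1..<i+1}"]) auto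
  have M: "?M = ?N"
    by (rule eq_matI) (auto simp del: upt_Suc simp: nth_upt)
  have d1: "det ?N = prod_list (diag_mat ?N)"
    by (rule det_lower_triangular[of i]) (auto simp: gen_lap_def PE_def)
  have d2: "diag_mat ?N = replicate i (-1)"
    using assms by (auto simp: diag_mat_def gen_lap_def PE_def intro: nth_equalityI)
  have d: "det ?N = (-1) ^ i" unfolding d1 d2 prod_list_replicate ..
  have sq: "det ?N * det ?N = 1"
    unfolding d power_mult_distrib[symmetric] by simp
  show ?thesis by (rule unit_of_sq[OF mem]) (simp only: M sq)
qed

lemma path_conn:
  assumes "i < n" "j < n"
  shows "(PE n)\<^sup>*\<^sup>* i j"
proof -
  have up: "(PE n)\<^sup>*\<^sup>* i j" if "i \<le> j" "j < n" for i j
    using that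
  proof (induct j)
    case 0 then show ?case by simp
  next
    case (Suc j)
    show ?case
    proof (cases "i = Suc j")
      case True then show ?thesis by simp
    next
      case False
      then have "(PE n)\<^sup>*\<^sup>* i j" using Suc by simp
      moreover have "PE n j (Suc j)" using Suc by (simp add: PE_def)
      ultimately show ?thesis by (rule rtranclp.rtrancl_into_rtrancl)
    qed
  qed
  have down: "(PE n)\<^sup>*\<^sup>* i j" if "j \<le> i" "i < n" for i j
    using that
  proof (induct i)
    case 0 then show ?case by simp
  next
    case (Suc i)
    show ?case
    proof (cases "j = Suc i")
      case True then show ?thesis by simp
    next
      case False
      then have "(PE n)\<^sup>*\<^sup>* i j" using Suc by simp
      moreover have "PE n (Suc i) i" using Suc by (simp add: PE_def)
      ultimately show ?thesis by (meson converse_rtranclp_into_rtranclp)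
    qed
  qed
  show ?thesis using up down assms by (cases "i \<le> j") auto
qed

theorem corollary5p4:
  fixes k :: nat
  shows "\<exists>V E. in_Forb k V E"
proof (intro exI)
  let ?n = "k + 2"
  let ?V = "{0..<?n}"
  let ?E = "PE ?n"
  have sg: "simple_graph ?V ?E" by (auto simp: simple_graph_def PE_def)
  have cg: "connected_graph ?V ?E" by (auto simp: connected_graph_def intro: path_conn)
  have cardV: "card ?V = k + 2" by simp
  have full: "\<not> generates_unit_ideal (minors ?V ?E (card ?V))"
    by (rule full_minor_nonunit) (auto simp: PE_def)
  have S: "{i \<in> {1..card ?V}. generates_unit_ideal (minors ?V ?E i)} = {1..k+1}"
  proof (rule equalityI; rule subsetI)
    fix i assume "i \<in> {i \<in> {1..card ?V}. generates_unit_ideal (minors ?V ?E i)}"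
    then show "i \<in> {1..k+1}" using full cardV by (cases "i = k + 2") auto
  next
    fix i assume "i \<in> {1..k+1}"
    then show "i \<in> {i \<in> {1..card ?V}. generates_unit_ideal (minors ?V ?E i)}"
      using path_unit[of i ?n] by auto
  qed
  have cor: "alg_corank ?V ?E = k + 1" unfolding alg_corank_def S by simp
  have del: "alg_corank (?V - {v}) (del_vertex_E ?E v) < k + 1" if v: "v \<in> ?V" for v
  proof -
    have c: "card (?V - {v}) = k + 1" using v by simp
    have ne: "?V - {v} \<noteq> {}"
    proof
      assume "?V - {v} = {}"
      then have "card (?V - {v}) = 0" by (simp only: card.empty)
      then show False using c by linarith
    qed
    have nu: "\<not> generates_unit_ideal (minors (?V - {v}) (del_vertex_E ?E v) (card (?V - {v})))"
      by (rule full_minor_nonunit[OF _ ne]) (auto simp: PE_def del_vertex_E_def)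
    have "{i \<in> {1..card (?V - {v})}. generates_unit_ideal (minors (?V - {v}) (del_vertex_E ?E v) i)} \<subseteq> {1..k}"
      using nu c by (auto simp: le_Suc_eq)
    then have "alg_corank (?V - {v}) (del_vertex_E ?E v) \<le> card {1..k}"
      unfolding alg_corank_def by (rule card_mono[rotated]) simp
    then show ?thesis by simp
  qed
  show "in_Forb k ?V ?E" unfolding in_Forb_def using sg cg cor del by simp
qed

end
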